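(* Let $\mathcal P$, $\widehat U=(\widehat h,\widehat{q^x},\widehat{q^y})$, $\widehat B$, $\widehat u,\widehat v$ and the stochastic Galerkin shallow water system be as in the context. Define $$E(\widehat U)=\tfrac12\big((\widehat{q^x})^\top\widehat u+(\widehat{q^y})^\top\widehat v\big)+\tfrac12 g\|\widehat h\|^2+g\,\widehat h^\top\widehat B,$$ $$H(\widehat U)=\tfrac12\big(\widehat u^\top\mathcal P(\widehat{q^x})\widehat u+\widehat v^\top\mathcal P(\widehat{q^x})\widehat v\big)+g(\widehat{q^x})^\top(\widehat h+\widehat B),$$ $$K(\widehat U)=\tfrac12\big(\widehat v^\top\mathcal P(\widehat{q^y})\widehat v+\widehat u^\top\mathcal P(\widehat{q^y})\widehat u\big)+g(\widehat{q^y})^\top(\widehat h+\widehat B).$$ If $\mathcal P(\widehat h)$ is strictly positive definite, then $(E,H,K)$ is an entropy flux pair for the stochastic Galerkin shallow water system, i.e. $E$ is convex in $\widehat U$ and every smooth solution satisfies $E(\widehat U)_t+H(\widehat U)_x+K(\widehat U)_y=0$.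
   Context: Let $\xi$ be a random variable in $\mathbb R^d$ with density $\rho$ having finite moments of all orders, and let $\phi_1\equiv1,\phi_2,\dots,\phi_K$ be polynomials orthonormal in $L^2_\rho$. For $k=1,\dots,K$ let $\mathcal M_k\in\mathbb R^{K\times K}$ with $(\mathcal M_k)_{l,m}=\int\phi_k\phi_l\phi_m\rho$, and for $\widehat z\in\mathbb R^K$ set $\mathcal P(\widehat z)=\sum_{k=1}^K\widehat z_k\mathcal M_k$ (a symmetric matrix). Let $g>0$. The stochastic Galerkin (SG) shallow water system is $\widehat U_t+\widehat F(\widehat U)_x+\widehat G(\widehat U)_y=\widehat S(\widehat U)$ for $\widehat U(x,y,t)=(\widehat h^\top,(\widehat{q^x})^\top,(\widehat{q^y})^\top)^\top\in\mathbb R^{3K}$, with a time-independent bottom coefficient vector $\widehat B(x,y)\in\mathbb R^K$, where $\widehat F(\widehat U)=\big(\widehat{q^x};\ \mathcal P(\widehat{q^x})\mathcal P^{-1}(\widehat h)\widehat{q^x}+\tfrac12 g\mathcal P(\widehat h)\widehat h;\ \mathcal P(\widehat{q^x})\mathcal P^{-1}(\widehat h)\widehat{q^y}\big)$, $\widehat G(\widehat U)=\big(\widehat{q^y};\ \mathcal P(\widehat{q^y})\mathcal P^{-1}(\widehat h)\widehat{q^x};\ \mathcal P(\widehat{q^y})\mathcal P^{-1}(\widehat h)\widehat{q^y}+\tfrac12 g\mathcal P(\widehat h)\widehat h\big)$, $\widehat S(\widehat U)=\big(0;\ -g\mathcal P(\widehat h)\widehat B_x;\ -g\mathcal P(\widehat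 h)\widehat B_y\big)$ (semicolons separate $K$-blocks). When $\mathcal P(\widehat h)$ is invertible, $\widehat u=\mathcal P^{-1}(\widehat h)\widehat{q^x}$ and $\widehat v=\mathcal P^{-1}(\widehat h)\widehat{q^y}$. An entropy flux pair for a balance law $U_t+F_x+G_y=S$ is a triple $(E,H,K)$ of scalar functions with $E$ convex in the state such that smooth solutions satisfy $E_t+H_x+K_y=0$. *)

theory Defs
  imports "HOL-Analysis.Analysis"
begin

inductive poly_fun :: "(real^'d \<Rightarrow> real) \<Rightarrow> bool" where
  pf_const: "poly_fun (\<lambda>_. c)"
| pf_coord: "poly_fun (\<lambda>x. x $ i)"
| pf_add: "poly_fun p \<Longrightarrow> poly_fun q \<Longrightarrow> poly_fun (\<lambda>x. p x + q x)"
| pf_mult: "poly_fun p \<Longrightarrow> poly_fun q \<Longrightarrow> poly_fun (\<lambda>x. p x * q x)"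

definition density_all_moments :: "(real^'d \<Rightarrow> real) \<Rightarrow> bool" where
  "density_all_moments \<rho> \<longleftrightarrow>
     \<rho> \<in> borel_measurable lborel \<and> (\<forall>\<xi>. 0 \<le> \<rho> \<xi>) \<and>
     integrable lborel \<rho> \<and> (\<integral>\<xi>. \<rho> \<xi> \<partial>lborel) = 1 \<and>
     (\<forall>n::nat. integrable lborel (\<lambda>\<xi>. norm \<xi> ^ n * \<rho> \<xi>))"

(* phi_k, k ranging over the finite index type 'k (K = CARD('k)), orthonormal in L^2_rho *)
definition orthonormal_L2 :: "('k \<Rightarrow> real^'d \<Rightarrow> real) \<Rightarrow> (real^'d \<Rightarrow> real) \<Rightarrow> bool" where
  "orthonormal_L2 \<phi> \<rho> \<longleftrightarrow>
     (\<forall>l m. integrable lborel (\<lambda>\<xi>. \<phi> l \<xi> * \<phi> m \<xi> * \<rho> \<xi>) \<and>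
            (\<integral>\<xi>. \<phi> l \<xi> * \<phi> m \<xi> * \<rho> \<xi> \<partial>lborel) = (if l = m then 1 else 0))"

definition Mmat :: "('k \<Rightarrow> real^'d \<Rightarrow> real) \<Rightarrow> (real^'d \<Rightarrow> real) \<Rightarrow> 'k::finite \<Rightarrow> real^'k^'k" where
  "Mmat \<phi> \<rho> k = (\<chi> l m. \<integral>\<xi>. \<phi> k \<xi> * \<phi> l \<xi> * \<phi> m \<xi> * \<rho> \<xi> \<partial>lborel)"

definition Pmat :: "('k \<Rightarrow> real^'d \<Rightarrow> real) \<Rightarrow> (real^'d \<Rightarrow> real) \<Rightarrow> real^'k \<Rightarrow> real^'k^'k::finite" where
  "Pmat \<phi> \<rho> z = (\<Sum>k\<in>UNIV. z $ k *\<^sub>R Mmat \<phi> \<rho> k)"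

definition posdef :: "real^'k^'k \<Rightarrow> bool" where
  "posdef A \<longleftrightarrow> transpose A = A \<and> (\<forall>x. x \<noteq> 0 \<longrightarrow> x \<bullet> (A *v x) > 0)"

type_synonym 'k sg_state = "(real^'k) \<times> (real^'k) \<times> (real^'k)"  (* (h, q^x, q^y) *)

definition sgF :: "real \<Rightarrow> (real^'k \<Rightarrow> real^'k^'k::finite) \<Rightarrow> 'k sg_state \<Rightarrow> 'k sg_state" where
  "sgF g P W = (case W of (h, qx, qy) \<Rightarrow>
     (qx,
      P qx *v (matrix_inv (P h) *v qx) + (g / 2) *\<^sub>R (P h *v h),
      P qx *v (matrix_inv (P h) *v qy)))"

definition sgG :: "real \<Rightarrow> (real^'k \<Rightarrow> real^'k^'k::finite) \<Rightarrow> 'k sg_state \<Rightarrow> 'k sg_state" where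
  "sgG g P W = (case W of (h, qx, qy) \<Rightarrow>
     (qy,
      P qy *v (matrix_inv (P h) *v qx),
      P qy *v (matrix_inv (P h) *v qy) + (g / 2) *\<^sub>R (P h *v h)))"

(* source term, given the bottom derivatives Bx, By *)
definition sgS :: "real \<Rightarrow> (real^'k \<Rightarrow> real^'k^'k::finite) \<Rightarrow> 'k sg_state \<Rightarrow> real^'k \<Rightarrow> real^'k \<Rightarrow> 'k sg_state" where
  "sgS g P W Bx By = (case W of (h, qx, qy) \<Rightarrow>
     (0, - g *\<^sub>R (P h *v Bx), - g *\<^sub>R (P h *v By)))"

(* entropy E and entropy fluxes H, K; u = P(h)^{-1} q^x, v = P(h)^{-1} q^y; b = bottom vector *)
definition sgE :: "real \<Rightarrow> (real^'k \<Rightarrow> real^'k^'k::finite) \<Rightarrow> real^'k \<Rightarrow> 'k sg_state \<Rightarrow> real" where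
  "sgE g P b W = (case W of (h, qx, qy) \<Rightarrow>
     let u = matrix_inv (P h) *v qx; v = matrix_inv (P h) *v qy in
     (1/2) * (qx \<bullet> u + qy \<bullet> v) + (1/2) * g * (norm h)^2 + g * (h \<bullet> b))"

definition sgH :: "real \<Rightarrow> (real^'k \<Rightarrow> real^'k^'k::finite) \<Rightarrow> real^'k \<Rightarrow> 'k sg_state \<Rightarrow> real" where
  "sgH g P b W = (case W of (h, qx, qy) \<Rightarrow>
     let u = matrix_inv (P h) *v qx; v = matrix_inv (P h) *v qy in
     (1/2) * (u \<bullet> (P qx *v u) + v \<bullet> (P qx *v v)) + g * (qx \<bullet> (h + b)))"

definition sgK :: "real \<Rightarrow> (real^'k \<Rightarrow> real^'k^'k::finite) \<Rightarrow> real^'k \<Rightarrow> 'k sg_state \<Rightarrow> real" where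
  "sgK g P b W = (case W of (h, qx, qy) \<Rightarrow>
     let u = matrix_inv (P h) *v qx; v = matrix_inv (P h) *v qy in
     (1/2) * (v \<bullet> (P qy *v v) + u \<bullet> (P qy *v u)) + g * (qy \<bullet> (h + b)))"

end

theory Submission
  imports Defs
begin

lemma M_sw12: "Mmat \<phi> \<rho> k $ l $ m = Mmat \<phi> \<rho> l $ k $ m"
  unfolding Mmat_def by (simp add: mult_ac)
lemma M_sw23: "Mmat \<phi> \<rho> k $ l $ m = Mmat \<phi> \<rho> k $ m $ l"
  unfolding Mmat_def by (simp add: mult_ac)

lemma P_entry: "Pmat \<phi> \<rho> z $ l $ m = (\<Sum>k\<in>UNIV. z $ k * Mmat \<phi> \<rho> k $ l $ m)"
  unfolding Pmat_def by (simp add: sum_component)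

lemma P_add: "Pmat \<phi> \<rho> (a + b) = Pmat \<phi> \<rho> a + Pmat \<phi> \<rho> b"
  unfolding Pmat_def by (simp add: scaleR_add_left sum.distrib)
lemma P_scale: "Pmat \<phi> \<rho> (c *\<^sub>R a) = c *\<^sub>R Pmat \<phi> \<rho> a"
  unfolding Pmat_def by (simp add: scaleR_sum_right)
lemma P_linear: "linear (Pmat \<phi> \<rho>)"
  by (rule linearI) (simp_all add: P_add P_scale)
lemma P_minus: "Pmat \<phi> \<rho> (- a) = - Pmat \<phi> \<rho> a"
  unfolding Pmat_def by (simp add: sum_negf)
lemma P_diff: "Pmat \<phi> \<rho> (a - b) = Pmat \<phi> \<rho> a - Pmat \<phi> \<rho> b"
  unfolding Pmat_def by (simp add: scaleR_diff_left sum_subtractf)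
lemma P_zero: "Pmat \<phi> \<rho> 0 = 0"
  unfolding Pmat_def by simp

lemma P_transpose: "transpose (Pmat \<phi> \<rho> a) = Pmat \<phi> \<rho> a"
  by (simp add: vec_eq_iff transpose_def P_entry M_sw23[of \<phi> \<rho> _ _])

lemma P_comm: "Pmat \<phi> \<rho> a *v b = Pmat \<phi> \<rho> b *v a"
proof -
  have "(Pmat \<phi> \<rho> a *v b) $ l = (Pmat \<phi> \<rho> b *v a) $ l" for l
  proof -
    have "(Pmat \<phi> \<rho> a *v b) $ l = (\<Sum>m\<in>UNIV. \<Sum>k\<in>UNIV. a $ k * b $ m * Mmat \<phi> \<rho> k $ l $ m)"
      by (simp add: matrix_vector_mult_def P_entry sum_distrib_left sum_distrib_right mult_ac)
    also have "\<dots> = (\<Sum>k\<in>UNIV. \<Sum>m\<in>UNIV. a $ k * b $ m * Mmat \<phi> \<rho> k $ l $ m)"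
      by (rule sum.swap)
    also have "\<dots> = (\<Sum>k\<in>UNIV. \<Sum>m\<in>UNIV. b $ m * a $ k * Mmat \<phi> \<rho> m $ l $ k)"
      by (intro sum.cong refl) (metis M_sw12 M_sw23 mult.commute)
    also have "\<dots> = (Pmat \<phi> \<rho> b *v a) $ l"
      by (simp add: matrix_vector_mult_def P_entry sum_distrib_left sum_distrib_right mult_ac)
    finally show ?thesis .
  qed
  then show ?thesis by (simp add: vec_eq_iff)
qed

lemma P_inner: "c \<bullet> (Pmat \<phi> \<rho> a *v b) = b \<bullet> (Pmat \<phi> \<rho> a *v c)"
  by (metis P_transpose dot_lmul_matrix inner_commute transpose_matrix_vector)

lemma invertible_minv:
  fixes A :: "real^'n^'n"
  assumes "invertible A"
  shows "A ** matrix_inv A = mat 1" "matrix_inv A ** A = mat 1"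
  using someI_ex[OF assms[unfolded invertible_def]] unfolding matrix_inv_def by auto

lemma minv_app:
  fixes A :: "real^'n^'n"
  assumes "invertible A"
  shows "A *v (matrix_inv A *v q) = q" "matrix_inv A *v (A *v q) = q"
  using invertible_minv[OF assms] by (simp_all add: matrix_vector_mul_assoc)

lemma posdef_invertible:
  fixes A :: "real^'n^'n"
  assumes "posdef A" shows "invertible A"
proof -
  have "\<forall>x. A *v x = 0 \<longrightarrow> x = 0"
    using assms unfolding posdef_def by (metis inner_zero_right less_irrefl)
  then show ?thesis
    using matrix_left_invertible_ker invertible_left_inverse by blast
qed

lemma differentiable_prod_real:
  fixes f :: "'i \<Rightarrow> real \<Rightarrow> real"
  assumes "\<forall>i\<in>I. f i differentiable (at x)"
  shows "(\<lambda>s. \<Prod>i\<in>I. f i s) differentiable (at x)"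
proof -
  from bchoice[OF assms[unfolded differentiable_def]] obtain D where
    "\<forall>i\<in>I. (f i has_derivative D i) (at x)" by blast
  then show ?thesis unfolding differentiable_def by (blast intro: has_derivative_prod)
qed

lemma entry_differentiable:
  fixes M :: "real \<Rightarrow> real^'n^'m"
  assumes "M differentiable (at x)"
  shows "(\<lambda>s. M s $ i $ j) differentiable (at x)"
proof -
  have "bounded_linear (\<lambda>A::real^'n^'m. (A $ i) $ j)"
    by (rule bounded_linear_compose[OF bounded_linear_vec_nth bounded_linear_vec_nth])
  then have "(\<lambda>A::real^'n^'m. A $ i $ j) differentiable (at (M x))"
    by (simp add: bounded_linear_imp_differentiable)
  from differentiable_chain_at[OF assms this] show ?thesis by (simp add: o_def)
qed

lemma det_differentiable:
  fixes M :: "real \<Rightarrow> real^'n^'n"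
  assumes "\<And>i j. (\<lambda>s. M s $ i $ j) differentiable (at x)"
  shows "(\<lambda>s. det (M s)) differentiable (at x)"
  unfolding det_def
  by (intro differentiable_sum ballI finite_Collect_subsets differentiable_mult differentiable_const
      differentiable_prod_real assms) (auto simp: finite_permutations)

lemma vec_as_sum: "(\<chi> k. f k) = (\<Sum>k\<in>UNIV. f k *\<^sub>R axis k (1::real))"
proof -
  have "(\<Sum>x\<in>UNIV. f x * (if i = x then 1 else 0)) = f i" for i
  proof -
    have "(\<Sum>x\<in>UNIV. f x * (if i = x then 1 else 0)) = (\<Sum>x\<in>UNIV. if i = x then f x else 0)"
      by (rule sum.cong) auto
    then show ?thesis by simp
  qed
  then show ?thesis by (simp add: vec_eq_iff sum_component axis_def)
qed

lemma bb_mv: "bounded_bilinear (\<lambda>(A::real^'n^'m) (x::real^'n). A *v x)"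
proof -
  have "bilinear (\<lambda>(A::real^'n^'m) (x::real^'n). A *v x)"
    unfolding bilinear_def
    by (auto intro!: linearI simp: matrix_vector_mult_add_rdistrib matrix_vector_right_distrib
        matrix_vector_mult_scaleR scaleR_matrix_vector_assoc)
  then show ?thesis by (simp add: bilinear_conv_bounded_bilinear)
qed

lemma comp_differentiable:
  fixes v :: "real \<Rightarrow> real^'n"
  assumes "v differentiable (at x)"
  shows "(\<lambda>s. v s $ i) differentiable (at x)"
proof -
  have "(\<lambda>A::real^'n. A $ i) differentiable (at (v x))"
    by (simp add: bounded_linear_imp_differentiable bounded_linear_vec_nth)
  from differentiable_chain_at[OF assms this] show ?thesis by (simp add: o_def)
qed

lemma inv_deriv:
  fixes Y :: "real \<Rightarrow> real^'n^'n" and q :: "real \<Rightarrow> real^'n"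
  assumes Yd: "(Y has_vector_derivative Y') (at x)" and qd: "(q has_vector_derivative q') (at x)"
    and inv: "invertible (Y x)"
  shows "((\<lambda>s. matrix_inv (Y s) *v q s) has_vector_derivative
           matrix_inv (Y x) *v (q' - Y' *v (matrix_inv (Y x) *v q x))) (at x)"
proof -
  define cr where "cr s = (\<chi> k. det (\<chi> i j. if j = k then q s $ i else Y s $ i $ j) / det (Y s))" for s
  define W where "W s = matrix_inv (Y s) *v q s" for s
  have Ydiff: "Y differentiable (at x)" using Yd differentiableI_vector by blast
  have qdiff: "q differentiable (at x)" using qd differentiableI_vector by blast
  have detY: "(\<lambda>s. det (Y s)) differentiable (at x)"
    by (intro det_differentiable entry_differentiable Ydiff)
  have d0: "det (Y x) \<noteq> 0" using inv invertible_det_nz by blast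
  have "continuous (at x) (\<lambda>s. det (Y s))"
    using detY differentiable_imp_continuous_within by blast
  then have "((\<lambda>s. det (Y s)) \<longlongrightarrow> det (Y x)) (at x)"
    by (simp add: continuous_at)
  from tendsto_imp_eventually_ne[OF this d0]
  have ev: "eventually (\<lambda>s. det (Y s) \<noteq> 0) (nhds x)"
    using d0 by (auto simp: eventually_at_filter elim: eventually_mono)
  have eq: "W s = cr s" if "det (Y s) \<noteq> 0" for s
  proof -
    have "invertible (Y s)" using that invertible_det_nz by blast
    then have "Y s *v W s = q s" unfolding W_def by (simp add: minv_app)
    then show ?thesis
      using cramer[OF that, of "W s" "q s"] unfolding cr_def by simp
  qed
  have crdiff: "cr differentiable (at x)"
  proof -
    have "(\<lambda>s. det (\<chi> i j. if j = k then q s $ i else Y s $ i $ j)) differentiable (at x)" for k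
      by (intro det_differentiable)
        (case_tac "j = k", auto intro: entry_differentiable comp_differentiable Ydiff qdiff)
    then show ?thesis
      unfolding cr_def vec_as_sum
      by (intro differentiable_sum ballI differentiable_scaleR differentiable_divide detY d0
          differentiable_const) auto
  qed
  then obtain D where crD: "(cr has_vector_derivative D) (at x)"
    using vector_derivative_works by blast
  have WD: "(W has_vector_derivative D) (at x)"
  proof -
    have "eventually (\<lambda>s. s \<in> UNIV \<longrightarrow> W s = cr s) (nhds x)"
      using ev by (auto elim: eventually_mono intro: eq)
    then show ?thesis
      using has_vector_derivative_cong_ev[where S=UNIV and x=x and f=W and g=cr] crD eq d0 by simp
  qed
  have "((\<lambda>s. Y s *v W s) has_vector_derivative (Y x *v D + Y' *v W x)) (at x)"
    using bounded_bilinear.has_vector_derivative[OF bb_mv Yd WD] by simp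
  moreover have "eventually (\<lambda>s. s \<in> UNIV \<longrightarrow> Y s *v W s = q s) (nhds x)"
    using ev by (auto elim!: eventually_mono simp: W_def minv_app invertible_det_nz)
  ultimately have "(q has_vector_derivative (Y x *v D + Y' *v W x)) (at x)"
    using has_vector_derivative_cong_ev[where S=UNIV and x=x and f="\<lambda>s. Y s *v W s" and g=q] inv
    by (simp add: W_def minv_app)
  then have "q' = Y x *v D + Y' *v W x" using qd vector_derivative_unique_at by blast
  then have "D = matrix_inv (Y x) *v (q' - Y' *v W x)"
    using inv by (simp add: minv_app)
  then show ?thesis using WD unfolding W_def by simp
qed

lemma sym_inner:
  fixes A :: "real^'n^'n"
  assumes "transpose A = A"
  shows "z \<bullet> (A *v w) = w \<bullet> (A *v z)"
  by (metis assms dot_lmul_matrix inner_commute transpose_matrix_vector)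

lemma quad_bound:
  fixes A :: "real^'n^'n"
  assumes "posdef A"
  shows "2 * (z \<bullet> q) - z \<bullet> (A *v z) \<le> q \<bullet> (matrix_inv A *v q)"
    and "2 * ((matrix_inv A *v q) \<bullet> q) - (matrix_inv A *v q) \<bullet> (A *v (matrix_inv A *v q))
          = q \<bullet> (matrix_inv A *v q)"
proof -
  have inv: "invertible A" using posdef_invertible[OF assms] .
  have sym: "transpose A = A" using assms posdef_def by blast
  define w where "w = matrix_inv A *v q"
  have qw: "q = A *v w" unfolding w_def using inv by (simp add: minv_app)
  have nn: "0 \<le> (z - w) \<bullet> (A *v (z - w))"
    using assms unfolding posdef_def by (cases "z - w = 0") (auto intro: less_imp_le)
  have e1: "(z - w) \<bullet> (A *v (z - w)) = z \<bullet> (A *v z) - 2 * (z \<bullet> (A *v w)) + w \<bullet> (A *v w)"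
    using sym_inner[OF sym, of w z]
    by (simp add: matrix_vector_mult_diff_distrib inner_diff_left inner_diff_right)
  have e2: "q \<bullet> w = w \<bullet> (A *v w)" by (simp add: qw inner_commute)
  show "2 * (z \<bullet> q) - z \<bullet> (A *v z) \<le> q \<bullet> (matrix_inv A *v q)"
    using nn e1 e2 unfolding w_def[symmetric] by (simp add: qw)
  show "2 * ((matrix_inv A *v q) \<bullet> q) - (matrix_inv A *v q) \<bullet> (A *v (matrix_inv A *v q))
          = q \<bullet> (matrix_inv A *v q)"
    unfolding w_def[symmetric] using e2 qw by (simp add: inner_commute)
qed

lemma posdef_comb:
  fixes A B :: "real^'n^'n"
  assumes "posdef A" "posdef B" "u \<ge> 0" "v \<ge> 0" "u + v = 1"
  shows "posdef (u *\<^sub>R A + v *\<^sub>R B)"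
  unfolding posdef_def
proof safe
  show "transpose (u *\<^sub>R A + v *\<^sub>R B) = u *\<^sub>R A + v *\<^sub>R B"
    using assms(1,2) unfolding posdef_def
    by (simp add: transpose_def vec_eq_iff)
  fix x :: "real^'n" assume "x \<noteq> 0"
  then have a: "x \<bullet> (A *v x) > 0" "x \<bullet> (B *v x) > 0" using assms(1,2) posdef_def by blast+
  have "x \<bullet> ((u *\<^sub>R A + v *\<^sub>R B) *v x) = u * (x \<bullet> (A *v x)) + v * (x \<bullet> (B *v x))"
    by (simp add: matrix_vector_mult_add_rdistrib inner_add_right scaleR_matrix_vector_assoc[symmetric])
  also have "\<dots> > 0"
  proof (cases "u = 0")
    case True then show ?thesis using a assms by simp
  next
    case False then show ?thesis using a assms
      by (smt (verit) mult_nonneg_nonneg mult_pos_pos)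
  qed
  finally show "x \<bullet> ((u *\<^sub>R A + v *\<^sub>R B) *v x) > 0" .
qed

lemma F_conv:
  fixes A1 A2 :: "real^'n^'n"
  assumes p1: "posdef A1" and p2: "posdef A2" and uv: "u \<ge> 0" "v \<ge> 0" "u + v = 1"
  shows "(u *\<^sub>R q1 + v *\<^sub>R q2) \<bullet> (matrix_inv (u *\<^sub>R A1 + v *\<^sub>R A2) *v (u *\<^sub>R q1 + v *\<^sub>R q2))
     \<le> u * (q1 \<bullet> (matrix_inv A1 *v q1)) + v * (q2 \<bullet> (matrix_inv A2 *v q2))"
proof -
  define A where "A = u *\<^sub>R A1 + v *\<^sub>R A2"
  define q where "q = u *\<^sub>R q1 + v *\<^sub>R q2"
  define z where "z = matrix_inv A *v q"
  have pA: "posdef A" unfolding A_def using posdef_comb[OF p1 p2 uv] .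
  have "q \<bullet> (matrix_inv A *v q) = 2 * (z \<bullet> q) - z \<bullet> (A *v z)"
    using quad_bound(2)[OF pA, of q] unfolding z_def by simp
  also have "\<dots> = u * (2 * (z \<bullet> q1) - z \<bullet> (A1 *v z)) + v * (2 * (z \<bullet> q2) - z \<bullet> (A2 *v z))"
    unfolding A_def q_def
    by (simp add: matrix_vector_mult_add_rdistrib inner_add_right scaleR_matrix_vector_assoc[symmetric]
        algebra_simps)
  also have "\<dots> \<le> u * (q1 \<bullet> (matrix_inv A1 *v q1)) + v * (q2 \<bullet> (matrix_inv A2 *v q2))"
    using quad_bound(1)[OF p1, of z q1] quad_bound(1)[OF p2, of z q2] uv
    by (intro add_mono mult_left_mono) auto
  finally show ?thesis unfolding A_def q_def .
qed

lemma normsq_conv: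
  fixes h1 h2 :: "real^'n"
  assumes uv: "u \<ge> 0" "v \<ge> 0" "u + v = 1"
  shows "(norm (u *\<^sub>R h1 + v *\<^sub>R h2))^2 \<le> u * (norm h1)^2 + v * (norm h2)^2"
proof -
  have "u * (norm h1)^2 + v * (norm h2)^2 - (norm (u *\<^sub>R h1 + v *\<^sub>R h2))^2
        = u * v * (norm (h1 - h2))^2"
  proof -
    have v: "v = 1 - u" using uv by simp
    show ?thesis unfolding power2_norm_eq_inner v
      by (simp add: inner_add_left inner_add_right inner_diff_left inner_diff_right inner_commute[of h2 h1]
          algebra_simps power2_eq_square)
  qed
  moreover have "u * v * (norm (h1 - h2))^2 \<ge> 0" using uv by simp
  ultimately show ?thesis by linarith
qed

lemma E_convex:
  assumes g: "g \<ge> 0"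
  shows "convex_on {W. posdef (Pmat \<phi> \<rho> (fst W))} (sgE g (Pmat \<phi> \<rho>) b)"
  unfolding convex_on_def convex_def
proof (intro conjI ballI allI impI)
  fix W1 W2 :: "'a sg_state" and u v :: real
  assume W1: "W1 \<in> {W. posdef (Pmat \<phi> \<rho> (fst W))}" and W2: "W2 \<in> {W. posdef (Pmat \<phi> \<rho> (fst W))}"
    and uv: "0 \<le> u" "0 \<le> v" "u + v = 1"
  obtain h1 a1 c1 where w1: "W1 = (h1, a1, c1)" by (cases W1) auto
  obtain h2 a2 c2 where w2: "W2 = (h2, a2, c2)" by (cases W2) auto
  have p1: "posdef (Pmat \<phi> \<rho> h1)" and p2: "posdef (Pmat \<phi> \<rho> h2)" using W1 W2 w1 w2 by auto
  have Pc: "Pmat \<phi> \<rho> (u *\<^sub>R h1 + v *\<^sub>R h2) = u *\<^sub>R Pmat \<phi> \<rho> h1 + v *\<^sub>R Pmat \<phi> \<rho> h2"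
    by (simp add: P_add P_scale)
  show "u *\<^sub>R W1 + v *\<^sub>R W2 \<in> {W. posdef (Pmat \<phi> \<rho> (fst W))}"
    using posdef_comb[OF p1 p2 uv] by (simp add: w1 w2 Pc)
  have f1: "(u *\<^sub>R a1 + v *\<^sub>R a2) \<bullet> (matrix_inv (Pmat \<phi> \<rho> (u *\<^sub>R h1 + v *\<^sub>R h2)) *v (u *\<^sub>R a1 + v *\<^sub>R a2))
     \<le> u * (a1 \<bullet> (matrix_inv (Pmat \<phi> \<rho> h1) *v a1)) + v * (a2 \<bullet> (matrix_inv (Pmat \<phi> \<rho> h2) *v a2))"
    unfolding Pc by (rule F_conv[OF p1 p2 uv])
  have f2: "(u *\<^sub>R c1 + v *\<^sub>R c2) \<bullet> (matrix_inv (Pmat \<phi> \<rho> (u *\<^sub>R h1 + v *\<^sub>R h2)) *v (u *\<^sub>R c1 + v *\<^sub>R c2))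
     \<le> u * (c1 \<bullet> (matrix_inv (Pmat \<phi> \<rho> h1) *v c1)) + v * (c2 \<bullet> (matrix_inv (Pmat \<phi> \<rho> h2) *v c2))"
    unfolding Pc by (rule F_conv[OF p1 p2 uv])
  have f3: "g * (norm (u *\<^sub>R h1 + v *\<^sub>R h2))^2 \<le> u * (g * (norm h1)^2) + v * (g * (norm h2)^2)"
    using mult_left_mono[OF normsq_conv[OF uv, of h1 h2] g] by (simp add: algebra_simps)
  have f4: "(u *\<^sub>R h1 + v *\<^sub>R h2) \<bullet> b = u * (h1 \<bullet> b) + v * (h2 \<bullet> b)"
    by (simp add: inner_add_left)
  show "sgE g (Pmat \<phi> \<rho>) b (u *\<^sub>R W1 + v *\<^sub>R W2) \<le> u * sgE g (Pmat \<phi> \<rho>) b W1 + v * sgE g (Pmat \<phi> \<rho>) b W2"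
  proof -
    have L: "sgE g (Pmat \<phi> \<rho>) b (u *\<^sub>R W1 + v *\<^sub>R W2) =
      1/2 * ((u *\<^sub>R a1 + v *\<^sub>R a2) \<bullet> (matrix_inv (Pmat \<phi> \<rho> (u *\<^sub>R h1 + v *\<^sub>R h2)) *v (u *\<^sub>R a1 + v *\<^sub>R a2))
       + (u *\<^sub>R c1 + v *\<^sub>R c2) \<bullet> (matrix_inv (Pmat \<phi> \<rho> (u *\<^sub>R h1 + v *\<^sub>R h2)) *v (u *\<^sub>R c1 + v *\<^sub>R c2)))
       + 1/2 * (g * (norm (u *\<^sub>R h1 + v *\<^sub>R h2))^2) + g * ((u *\<^sub>R h1 + v *\<^sub>R h2) \<bullet> b)"
      unfolding w1 w2 sgE_def by (simp add: Let_def)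
    have R1: "sgE g (Pmat \<phi> \<rho>) b W1 = 1/2 * (a1 \<bullet> (matrix_inv (Pmat \<phi> \<rho> h1) *v a1) + c1 \<bullet> (matrix_inv (Pmat \<phi> \<rho> h1) *v c1))
       + 1/2 * (g * (norm h1)^2) + g * (h1 \<bullet> b)"
      unfolding w1 sgE_def by (simp add: Let_def)
    have R2: "sgE g (Pmat \<phi> \<rho>) b W2 = 1/2 * (a2 \<bullet> (matrix_inv (Pmat \<phi> \<rho> h2) *v a2) + c2 \<bullet> (matrix_inv (Pmat \<phi> \<rho> h2) *v c2))
       + 1/2 * (g * (norm h2)^2) + g * (h2 \<bullet> b)"
      unfolding w2 sgE_def by (simp add: Let_def)
    have gen: "1/2 * (Fa + Fc) + 1/2 * N + g * X \<le> u * (1/2 * (A1 + C1) + 1/2 * n1 + g * x1)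
          + v * (1/2 * (A2 + C2) + 1/2 * n2 + g * x2)"
      if "Fa \<le> u * A1 + v * A2" "Fc \<le> u * C1 + v * C2" "N \<le> u * n1 + v * n2"
       "X = u * x1 + v * x2" for Fa Fc N X A1 A2 C1 C2 n1 n2 x1 x2 :: real
    proof -
      have e: "u * (1/2 * (A1 + C1) + 1/2 * n1 + g * x1) + v * (1/2 * (A2 + C2) + 1/2 * n2 + g * x2)
        = 1/2 * ((u * A1 + v * A2) + (u * C1 + v * C2)) + 1/2 * (u * n1 + v * n2) + g * (u * x1 + v * x2)"
        by (simp add: field_simps)
      show ?thesis unfolding e that(4)
        by (intro add_mono mult_left_mono that(1-3) order_refl) auto
    qed
    show ?thesis unfolding L R1 R2 by (rule gen[OF f1 f2 f3 f4])
  qed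
qed

lemma P_bl: "bounded_linear (Pmat \<phi> \<rho>)"
  using P_linear linear_conv_bounded_linear by blast

lemma P_path:
  assumes "(h has_vector_derivative h') (at s0)"
  shows "((\<lambda>s. Pmat \<phi> \<rho> (h s)) has_vector_derivative Pmat \<phi> \<rho> h') (at s0)"
  using bounded_linear.has_vector_derivative[OF P_bl assms] .

lemma u_path:
  assumes hd: "(h has_vector_derivative h') (at s0)" and ad: "(a has_vector_derivative a') (at s0)"
    and inv: "invertible (Pmat \<phi> \<rho> (h s0))"
  shows "((\<lambda>s. matrix_inv (Pmat \<phi> \<rho> (h s)) *v a s) has_vector_derivative
     matrix_inv (Pmat \<phi> \<rho> (h s0)) *v (a' - Pmat \<phi> \<rho> h' *v (matrix_inv (Pmat \<phi> \<rho> (h s0)) *v a s0))) (at s0)"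
  using inv_deriv[OF P_path[OF hd] ad inv] .

lemma inner_path:
  fixes f g :: "real \<Rightarrow> real^'n"
  assumes "(f has_vector_derivative f') (at s0)" "(g has_vector_derivative g') (at s0)"
  shows "((\<lambda>s. f s \<bullet> g s) has_real_derivative (f s0 \<bullet> g' + f' \<bullet> g s0)) (at s0)"
  using bounded_bilinear.has_vector_derivative[OF bounded_bilinear_inner assms]
  by (simp add: has_real_derivative_iff_has_vector_derivative)

lemma mv_path:
  fixes A :: "real \<Rightarrow> real^'n^'m" and f :: "real \<Rightarrow> real^'n"
  assumes "(A has_vector_derivative A') (at s0)" "(f has_vector_derivative f') (at s0)"
  shows "((\<lambda>s. A s *v f s) has_vector_derivative (A s0 *v f' + A' *v f s0)) (at s0)"
  using bounded_bilinear.has_vector_derivative[OF bb_mv assms] by simp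

lemma E_path:
  fixes h a c :: "real \<Rightarrow> real^'k::finite"
  assumes hd: "(h has_vector_derivative h') (at s0)" and ad: "(a has_vector_derivative a') (at s0)"
    and cd: "(c has_vector_derivative c') (at s0)"
    and inv: "invertible (Pmat \<phi> \<rho> (h s0))"
  defines "u \<equiv> matrix_inv (Pmat \<phi> \<rho> (h s0)) *v a s0"
    and "v \<equiv> matrix_inv (Pmat \<phi> \<rho> (h s0)) *v c s0"
  shows "((\<lambda>s. sgE g (Pmat \<phi> \<rho>) b (h s, a s, c s)) has_real_derivative
     (a' \<bullet> u + c' \<bullet> v - 1/2 * (u \<bullet> (Pmat \<phi> \<rho> h' *v u)) - 1/2 * (v \<bullet> (Pmat \<phi> \<rho> h' *v v))
      + g * (h s0 \<bullet> h') + g * (h' \<bullet> b))) (at s0)"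
proof -
  let ?P = "Pmat \<phi> \<rho>"
  define U where "U s = matrix_inv (?P (h s)) *v a s" for s
  define V where "V s = matrix_inv (?P (h s)) *v c s" for s
  define U' where "U' = matrix_inv (?P (h s0)) *v (a' - ?P h' *v u)"
  define V' where "V' = matrix_inv (?P (h s0)) *v (c' - ?P h' *v v)"
  have Ud: "(U has_vector_derivative U') (at s0)"
    unfolding U_def U'_def u_def by (rule u_path[OF hd ad inv])
  have Vd: "(V has_vector_derivative V') (at s0)"
    unfolding V_def V'_def v_def by (rule u_path[OF hd cd inv])
  have sym: "transpose (?P (h s0)) = ?P (h s0)" by (rule P_transpose)
  have PU': "?P (h s0) *v U' = a' - ?P h' *v u" unfolding U'_def using inv by (simp add: minv_app)
  have PV': "?P (h s0) *v V' = c' - ?P h' *v v" unfolding V'_def using inv by (simp add: minv_app)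
  have au: "a s0 = ?P (h s0) *v u" unfolding u_def using inv by (simp add: minv_app)
  have cv: "c s0 = ?P (h s0) *v v" unfolding v_def using inv by (simp add: minv_app)
  have e1: "a s0 \<bullet> U' = u \<bullet> a' - u \<bullet> (?P h' *v u)"
    unfolding au using sym_inner[OF sym, of U' u] PU' by (simp add: inner_diff_right inner_commute)
  have e2: "c s0 \<bullet> V' = v \<bullet> c' - v \<bullet> (?P h' *v v)"
    unfolding cv using sym_inner[OF sym, of V' v] PV' by (simp add: inner_diff_right inner_commute)
  have feq: "(\<lambda>s. sgE g ?P b (h s, a s, c s)) =
     (\<lambda>s. (1/2) * (a s \<bullet> U s + c s \<bullet> V s) + (1/2) * g * (h s \<bullet> h s) + g * (h s \<bullet> b))"
    by (simp add: sgE_def U_def V_def Let_def power2_norm_eq_inner)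
  have "((\<lambda>s. (1/2) * (a s \<bullet> U s + c s \<bullet> V s) + (1/2) * g * (h s \<bullet> h s) + g * (h s \<bullet> b))
     has_real_derivative
       ((1/2) * ((a s0 \<bullet> U' + a' \<bullet> U s0) + (c s0 \<bullet> V' + c' \<bullet> V s0))
        + (1/2) * g * (h s0 \<bullet> h' + h' \<bullet> h s0) + g * (h s0 \<bullet> 0 + h' \<bullet> b))) (at s0)"
    by (intro DERIV_add DERIV_cmult inner_path ad cd hd Ud Vd has_vector_derivative_const)
  moreover have "(1/2) * ((a s0 \<bullet> U' + a' \<bullet> U s0) + (c s0 \<bullet> V' + c' \<bullet> V s0))
        + (1/2) * g * (h s0 \<bullet> h' + h' \<bullet> h s0) + g * (h s0 \<bullet> 0 + h' \<bullet> b)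
     = a' \<bullet> u + c' \<bullet> v - 1/2 * (u \<bullet> (?P h' *v u)) - 1/2 * (v \<bullet> (?P h' *v v))
      + g * (h s0 \<bullet> h') + g * (h' \<bullet> b)"
  proof -
    have "U s0 = u" "V s0 = v" by (simp_all add: U_def V_def u_def v_def)
    then show ?thesis unfolding e1 e2
      by (simp add: inner_commute[of u a'] inner_commute[of v c'] inner_commute[of h' "h s0"]
        algebra_simps)
  qed
  ultimately show ?thesis unfolding feq by simp
qed

lemma H_path:
  fixes h a c \<beta> :: "real \<Rightarrow> real^'k::finite"
  assumes hd: "(h has_vector_derivative h') (at s0)" and ad: "(a has_vector_derivative a') (at s0)"
    and cd: "(c has_vector_derivative c') (at s0)" and bd: "(\<beta> has_vector_derivative \<beta>') (at s0)"
    and inv: "invertible (Pmat \<phi> \<rho> (h s0))"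
  defines "u \<equiv> matrix_inv (Pmat \<phi> \<rho> (h s0)) *v a s0"
    and "v \<equiv> matrix_inv (Pmat \<phi> \<rho> (h s0)) *v c s0"
  shows "((\<lambda>s. sgH g (Pmat \<phi> \<rho>) (\<beta> s) (h s, a s, c s)) has_real_derivative
     (u \<bullet> (Pmat \<phi> \<rho> (a s0) *v (matrix_inv (Pmat \<phi> \<rho> (h s0)) *v (a' - Pmat \<phi> \<rho> h' *v u)))
      + 1/2 * (u \<bullet> (Pmat \<phi> \<rho> a' *v u))
      + v \<bullet> (Pmat \<phi> \<rho> (a s0) *v (matrix_inv (Pmat \<phi> \<rho> (h s0)) *v (c' - Pmat \<phi> \<rho> h' *v v)))
      + 1/2 * (v \<bullet> (Pmat \<phi> \<rho> a' *v v))
      + g * (a' \<bullet> (h s0 + \<beta> s0)) + g * (a s0 \<bullet> (h' + \<beta>')))) (at s0)"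
proof -
  let ?P = "Pmat \<phi> \<rho>"
  define U where "U s = matrix_inv (?P (h s)) *v a s" for s
  define V where "V s = matrix_inv (?P (h s)) *v c s" for s
  define U' where "U' = matrix_inv (?P (h s0)) *v (a' - ?P h' *v u)"
  define V' where "V' = matrix_inv (?P (h s0)) *v (c' - ?P h' *v v)"
  have Ud: "(U has_vector_derivative U') (at s0)"
    unfolding U_def U'_def u_def by (rule u_path[OF hd ad inv])
  have Vd: "(V has_vector_derivative V') (at s0)"
    unfolding V_def V'_def v_def by (rule u_path[OF hd cd inv])
  have U0: "U s0 = u" "V s0 = v" by (simp_all add: U_def V_def u_def v_def)
  have feq: "(\<lambda>s. sgH g ?P (\<beta> s) (h s, a s, c s)) =
     (\<lambda>s. (1/2) * (U s \<bullet> (?P (a s) *v U s) + V s \<bullet> (?P (a s) *v V s)) + g * (a s \<bullet> (h s + \<beta> s)))"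
    by (simp add: sgH_def U_def V_def Let_def)
  have "((\<lambda>s. (1/2) * (U s \<bullet> (?P (a s) *v U s) + V s \<bullet> (?P (a s) *v V s)) + g * (a s \<bullet> (h s + \<beta> s)))
     has_real_derivative
       ((1/2) * ((U s0 \<bullet> (?P (a s0) *v U' + ?P a' *v U s0) + U' \<bullet> (?P (a s0) *v U s0))
               + (V s0 \<bullet> (?P (a s0) *v V' + ?P a' *v V s0) + V' \<bullet> (?P (a s0) *v V s0)))
        + g * (a s0 \<bullet> (h' + \<beta>') + a' \<bullet> (h s0 + \<beta> s0)))) (at s0)"
    by (intro DERIV_add DERIV_cmult inner_path mv_path P_path ad cd hd bd Ud Vd
        has_vector_derivative_add)
  moreover have "(1/2) * ((U s0 \<bullet> (?P (a s0) *v U' + ?P a' *v U s0) + U' \<bullet> (?P (a s0) *v U s0))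
               + (V s0 \<bullet> (?P (a s0) *v V' + ?P a' *v V s0) + V' \<bullet> (?P (a s0) *v V s0)))
        + g * (a s0 \<bullet> (h' + \<beta>') + a' \<bullet> (h s0 + \<beta> s0))
     = u \<bullet> (?P (a s0) *v U') + 1/2 * (u \<bullet> (?P a' *v u)) + v \<bullet> (?P (a s0) *v V')
      + 1/2 * (v \<bullet> (?P a' *v v)) + g * (a' \<bullet> (h s0 + \<beta> s0)) + g * (a s0 \<bullet> (h' + \<beta>'))"
    unfolding U0 using P_inner[of U' \<phi> \<rho> "a s0" u] P_inner[of V' \<phi> \<rho> "a s0" v]
    by (simp add: inner_add_right algebra_simps)
  ultimately show ?thesis unfolding feq U'_def V'_def by simp
qed

lemma F_path:
  fixes h a c :: "real \<Rightarrow> real^'k::finite"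
  assumes hd: "(h has_vector_derivative h') (at s0)" and ad: "(a has_vector_derivative a') (at s0)"
    and cd: "(c has_vector_derivative c') (at s0)"
    and inv: "invertible (Pmat \<phi> \<rho> (h s0))"
  defines "u \<equiv> matrix_inv (Pmat \<phi> \<rho> (h s0)) *v a s0"
    and "v \<equiv> matrix_inv (Pmat \<phi> \<rho> (h s0)) *v c s0"
  shows "((\<lambda>s. sgF g (Pmat \<phi> \<rho>) (h s, a s, c s)) has_vector_derivative
     (a', Pmat \<phi> \<rho> a' *v u + Pmat \<phi> \<rho> (a s0) *v (matrix_inv (Pmat \<phi> \<rho> (h s0)) *v (a' - Pmat \<phi> \<rho> h' *v u))
          + g *\<^sub>R (Pmat \<phi> \<rho> (h s0) *v h'),
      Pmat \<phi> \<rho> a' *v v + Pmat \<phi> \<rho> (a s0) *v (matrix_inv (Pmat \<phi> \<rho> (h s0)) *v (c' - Pmat \<phi> \<rho> h' *v v))))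
     (at s0)"
proof -
  let ?P = "Pmat \<phi> \<rho>"
  define U where "U s = matrix_inv (?P (h s)) *v a s" for s
  define V where "V s = matrix_inv (?P (h s)) *v c s" for s
  define U' where "U' = matrix_inv (?P (h s0)) *v (a' - ?P h' *v u)"
  define V' where "V' = matrix_inv (?P (h s0)) *v (c' - ?P h' *v v)"
  have Ud: "(U has_vector_derivative U') (at s0)"
    unfolding U_def U'_def u_def by (rule u_path[OF hd ad inv])
  have Vd: "(V has_vector_derivative V') (at s0)"
    unfolding V_def V'_def v_def by (rule u_path[OF hd cd inv])
  have U0: "U s0 = u" "V s0 = v" by (simp_all add: U_def V_def u_def v_def)
  have feq: "(\<lambda>s. sgF g ?P (h s, a s, c s)) =
     (\<lambda>s. (a s, ?P (a s) *v U s + (g/2) *\<^sub>R (?P (h s) *v h s), ?P (a s) *v V s))"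
    by (simp add: sgF_def U_def V_def)
  have sc: "((\<lambda>s. (g/2) *\<^sub>R (?P (h s) *v h s)) has_vector_derivative
      (g/2) *\<^sub>R (?P (h s0) *v h' + ?P h' *v h s0)) (at s0)"
    by (rule bounded_linear.has_vector_derivative[OF bounded_linear_scaleR_right mv_path[OF P_path[OF hd] hd]])
  have "((\<lambda>s. (a s, ?P (a s) *v U s + (g/2) *\<^sub>R (?P (h s) *v h s), ?P (a s) *v V s)) has_vector_derivative
     (a', (?P (a s0) *v U' + ?P a' *v U s0) + (g/2) *\<^sub>R (?P (h s0) *v h' + ?P h' *v h s0),
      ?P (a s0) *v V' + ?P a' *v V s0)) (at s0)"
    by (intro has_vector_derivative_Pair has_vector_derivative_add ad sc mv_path P_path Ud Vd)
  moreover have "(?P (a s0) *v U' + ?P a' *v U s0) + (g/2) *\<^sub>R (?P (h s0) *v h' + ?P h' *v h s0)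
     = ?P a' *v u + ?P (a s0) *v U' + g *\<^sub>R (?P (h s0) *v h')"
    unfolding U0 P_comm[of \<phi> \<rho> h' "h s0"]
    by (simp add: algebra_simps scaleR_2[symmetric] flip: scaleR_add_right)
  ultimately show ?thesis unfolding feq U'_def V'_def U0 by (simp add: add.commute)
qed

lemma F_path_G:
  fixes h a c :: "real \<Rightarrow> real^'k::finite"
  assumes hd: "(h has_vector_derivative h') (at s0)" and ad: "(a has_vector_derivative a') (at s0)"
    and cd: "(c has_vector_derivative c') (at s0)"
    and inv: "invertible (Pmat \<phi> \<rho> (h s0))"
  defines "u \<equiv> matrix_inv (Pmat \<phi> \<rho> (h s0)) *v a s0"
    and "v \<equiv> matrix_inv (Pmat \<phi> \<rho> (h s0)) *v c s0"
  shows "((\<lambda>s. sgG g (Pmat \<phi> \<rho>) (h s, a s, c s)) has_vector_derivative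
     (c', Pmat \<phi> \<rho> c' *v u + Pmat \<phi> \<rho> (c s0) *v (matrix_inv (Pmat \<phi> \<rho> (h s0)) *v (a' - Pmat \<phi> \<rho> h' *v u)),
      Pmat \<phi> \<rho> c' *v v + Pmat \<phi> \<rho> (c s0) *v (matrix_inv (Pmat \<phi> \<rho> (h s0)) *v (c' - Pmat \<phi> \<rho> h' *v v))
          + g *\<^sub>R (Pmat \<phi> \<rho> (h s0) *v h')))
     (at s0)"
proof -
  have sw: "sgG g (Pmat \<phi> \<rho>) (h s, a s, c s) = (\<lambda>(p, q, r). (p, r, q)) (sgF g (Pmat \<phi> \<rho>) (h s, c s, a s))" for s
    by (simp add: sgF_def sgG_def)
  have bl: "bounded_linear (\<lambda>(p::real^'k, q::real^'k, r::real^'k). (p, r, q))"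
    by (rule bounded_linear_intro[where K=1]) (auto simp: norm_Pair)
  show ?thesis
    unfolding sw using bounded_linear.has_vector_derivative[OF bl F_path[OF hd cd ad inv, of g]]
    by (simp add: u_def v_def)
qed

lemma K_as_H: "sgK g P \<beta> (h, a, c) = sgH g P \<beta> (h, c, a)"
  by (simp add: sgK_def sgH_def Let_def add.commute)

lemma mv_neg: fixes A :: "real^'n^'m" shows "(- A) *v x = - (A *v x)"
  by (simp add: matrix_vector_mult_def vec_eq_iff sum_negf)

theorem theorem3p1:
  fixes \<rho> :: "real^'d \<Rightarrow> real"
    and \<phi> :: "'k::finite \<Rightarrow> real^'d \<Rightarrow> real"
    and k1 :: 'k
    and g :: real
    and S :: "(real \<times> real \<times> real) set"
    and U Ux Uy Ut :: "real \<Rightarrow> real \<Rightarrow> real \<Rightarrow> 'k sg_state"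
    and B Bx By :: "real \<Rightarrow> real \<Rightarrow> real^'k"
  assumes rho: "density_all_moments \<rho>"
    and poly: "\<forall>k. poly_fun (\<phi> k)"
    and phi1: "\<phi> k1 = (\<lambda>_. 1)"
    and orth: "orthonormal_L2 \<phi> \<rho>"
    and g_pos: "g > 0"
    and S_open: "open S"
    and U_diff: "\<forall>x y t. (x, y, t) \<in> S \<longrightarrow>
        ((\<lambda>s. U s y t) has_vector_derivative Ux x y t) (at x) \<and>
        ((\<lambda>s. U x s t) has_vector_derivative Uy x y t) (at y) \<and>
        ((\<lambda>s. U x y s) has_vector_derivative Ut x y t) (at t)"
    and B_diff: "\<forall>x y t. (x, y, t) \<in> S \<longrightarrow>
        ((\<lambda>s. B s y) has_vector_derivative Bx x y) (at x) \<and>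
        ((\<lambda>s. B x s) has_vector_derivative By x y) (at y)"
    and pos_def: "\<forall>x y t. (x, y, t) \<in> S \<longrightarrow> posdef (Pmat \<phi> \<rho> (fst (U x y t)))"
    and sg_pde: "\<forall>x y t. (x, y, t) \<in> S \<longrightarrow>
        (\<exists>Fx Gy.
           ((\<lambda>s. sgF g (Pmat \<phi> \<rho>) (U s y t)) has_vector_derivative Fx) (at x) \<and>
           ((\<lambda>s. sgG g (Pmat \<phi> \<rho>) (U x s t)) has_vector_derivative Gy) (at y) \<and>
           Ut x y t + Fx + Gy = sgS g (Pmat \<phi> \<rho>) (U x y t) (Bx x y) (By x y))"
  shows "(\<forall>b. convex_on {W. posdef (Pmat \<phi> \<rho> (fst W))} (sgE g (Pmat \<phi> \<rho>) b)) \<and>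
         (\<forall>x y t. (x, y, t) \<in> S \<longrightarrow>
            (\<exists>Et Hx Ky.
               ((\<lambda>s. sgE g (Pmat \<phi> \<rho>) (B x y) (U x y s)) has_real_derivative Et) (at t) \<and>
               ((\<lambda>s. sgH g (Pmat \<phi> \<rho>) (B s y) (U s y t)) has_real_derivative Hx) (at x) \<and>
               ((\<lambda>s. sgK g (Pmat \<phi> \<rho>) (B x s) (U x s t)) has_real_derivative Ky) (at y) \<and>
               Et + Hx + Ky = 0))"
proof -
  let ?P = "Pmat \<phi> \<rho>"
  have conv: "\<forall>b. convex_on {W. posdef (?P (fst W))} (sgE g ?P b)"
    using g_pos by (intro allI E_convex) simp
  have blf: "bounded_linear (fst :: 'k sg_state \<Rightarrow> real^'k)" by (rule bounded_linear_fst)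
  have blfs: "bounded_linear (\<lambda>w::'k sg_state. fst (snd w))"
    by (rule bounded_linear_compose[OF bounded_linear_fst bounded_linear_snd])
  have blss: "bounded_linear (\<lambda>w::'k sg_state. snd (snd w))"
    by (rule bounded_linear_compose[OF bounded_linear_snd bounded_linear_snd])
  have comps: "((\<lambda>s. fst (f s)) has_vector_derivative fst D) (at s0)"
     "((\<lambda>s. fst (snd (f s))) has_vector_derivative fst (snd D)) (at s0)"
     "((\<lambda>s. snd (snd (f s))) has_vector_derivative snd (snd D)) (at s0)"
    if "(f has_vector_derivative D) (at s0)" for f :: "real \<Rightarrow> 'k sg_state" and D s0
    using bounded_linear.has_vector_derivative[OF blf that]
      bounded_linear.has_vector_derivative[OF blfs that]
      bounded_linear.has_vector_derivative[OF blss that] by auto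
  have pde: "\<exists>Et Hx Ky.
               ((\<lambda>s. sgE g ?P (B x y) (U x y s)) has_real_derivative Et) (at t) \<and>
               ((\<lambda>s. sgH g ?P (B s y) (U s y t)) has_real_derivative Hx) (at x) \<and>
               ((\<lambda>s. sgK g ?P (B x s) (U x s t)) has_real_derivative Ky) (at y) \<and>
               Et + Hx + Ky = 0" if xyt: "(x, y, t) \<in> S" for x y t
  proof -
    obtain h a c where U0: "U x y t = (h, a, c)" by (cases "U x y t") auto
    obtain ht at1 ct where Ut0: "Ut x y t = (ht, at1, ct)" by (cases "Ut x y t") auto
    obtain hx ax cx where Ux0: "Ux x y t = (hx, ax, cx)" by (cases "Ux x y t") auto
    obtain hy ay cy where Uy0: "Uy x y t = (hy, ay, cy)" by (cases "Uy x y t") auto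
    define b where "b = B x y"
    define bx where "bx = Bx x y"
    define by' where "by' = By x y"
    have inv: "invertible (?P h)"
      using pos_def xyt U0 posdef_invertible by fastforce
    define u where "u = matrix_inv (?P h) *v a"
    define v where "v = matrix_inv (?P h) *v c"
    define ux where "ux = matrix_inv (?P h) *v (ax - ?P hx *v u)"
    define vx where "vx = matrix_inv (?P h) *v (cx - ?P hx *v v)"
    define uy where "uy = matrix_inv (?P h) *v (ay - ?P hy *v u)"
    define vy where "vy = matrix_inv (?P h) *v (cy - ?P hy *v v)"
    have UD: "((\<lambda>s. U s y t) has_vector_derivative Ux x y t) (at x) \<and>
        ((\<lambda>s. U x s t) has_vector_derivative Uy x y t) (at y) \<and>
        ((\<lambda>s. U x y s) has_vector_derivative Ut x y t) (at t)"
      using U_diff xyt by blast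
    have dX: "((\<lambda>s. U s y t) has_vector_derivative (hx, ax, cx)) (at x)"
      using UD Ux0 by simp
    have dY: "((\<lambda>s. U x s t) has_vector_derivative (hy, ay, cy)) (at y)"
      using UD Uy0 by simp
    have dT: "((\<lambda>s. U x y s) has_vector_derivative (ht, at1, ct)) (at t)"
      using UD Ut0 by simp
    have BD: "((\<lambda>s. B s y) has_vector_derivative Bx x y) (at x) \<and>
        ((\<lambda>s. B x s) has_vector_derivative By x y) (at y)"
      using B_diff xyt by blast
    have dBx: "((\<lambda>s. B s y) has_vector_derivative bx) (at x)"
      using BD bx_def by simp
    have dBy: "((\<lambda>s. B x s) has_vector_derivative by') (at y)"
      using BD by'_def by simp
    note cX = comps[OF dX, simplified] and cY = comps[OF dY, simplified] and cT = comps[OF dT, simplified]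
    have invX: "invertible (?P (fst (U x y t)))" using inv U0 by simp
    have eqE: "(\<lambda>s. sgE g ?P b (U x y s)) = (\<lambda>s. sgE g ?P b (fst (U x y s), fst (snd (U x y s)), snd (snd (U x y s))))"
      by simp
    have eqH: "(\<lambda>s. sgH g ?P (B s y) (U s y t)) = (\<lambda>s. sgH g ?P (B s y) (fst (U s y t), fst (snd (U s y t)), snd (snd (U s y t))))"
      by simp
    have eqK: "(\<lambda>s. sgK g ?P (B x s) (U x s t)) = (\<lambda>s. sgH g ?P (B x s) (fst (U x s t), snd (snd (U x s t)), fst (snd (U x s t))))"
      by (simp add: K_as_H[symmetric])
    have eqF: "(\<lambda>s. sgF g ?P (U s y t)) = (\<lambda>s. sgF g ?P (fst (U s y t), fst (snd (U s y t)), snd (snd (U s y t))))"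
      by simp
    have eqG: "(\<lambda>s. sgG g ?P (U x s t)) = (\<lambda>s. sgG g ?P (fst (U x s t), fst (snd (U x s t)), snd (snd (U x s t))))"
      by simp
    have DE: "((\<lambda>s. sgE g ?P b (U x y s)) has_real_derivative
       (at1 \<bullet> u + ct \<bullet> v - 1/2 * (u \<bullet> (?P ht *v u)) - 1/2 * (v \<bullet> (?P ht *v v))
        + g * (h \<bullet> ht) + g * (ht \<bullet> b))) (at t)"
      unfolding eqE using E_path[OF cT invX, of g b] U0 u_def v_def by simp
    have DH: "((\<lambda>s. sgH g ?P (B s y) (U s y t)) has_real_derivative
       (u \<bullet> (?P a *v ux) + 1/2 * (u \<bullet> (?P ax *v u)) + v \<bullet> (?P a *v vx) + 1/2 * (v \<bullet> (?P ax *v v))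
        + g * (ax \<bullet> (h + b)) + g * (a \<bullet> (hx + bx)))) (at x)"
      unfolding eqH using H_path[OF cX dBx invX, of g] U0 u_def v_def ux_def vx_def b_def by simp
    have DK: "((\<lambda>s. sgK g ?P (B x s) (U x s t)) has_real_derivative
       (v \<bullet> (?P c *v vy) + 1/2 * (v \<bullet> (?P cy *v v)) + u \<bullet> (?P c *v uy) + 1/2 * (u \<bullet> (?P cy *v u))
        + g * (cy \<bullet> (h + b)) + g * (c \<bullet> (hy + by')))) (at y)"
      unfolding eqK using H_path[OF cY(1) cY(3) cY(2) dBy invX, of g] U0 u_def v_def uy_def vy_def b_def by simp
    obtain Fx Gy where
      Fd: "((\<lambda>s. sgF g ?P (U s y t)) has_vector_derivative Fx) (at x)" and
      Gd: "((\<lambda>s. sgG g ?P (U x s t)) has_vector_derivative Gy) (at y)" and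
      eqn: "Ut x y t + Fx + Gy = sgS g ?P (U x y t) (Bx x y) (By x y)"
      using sg_pde xyt by blast
    have Fd': "((\<lambda>s. sgF g ?P (U s y t)) has_vector_derivative
       (ax, ?P ax *v u + ?P a *v ux + g *\<^sub>R (?P h *v hx), ?P ax *v v + ?P a *v vx)) (at x)"
      unfolding eqF using F_path[OF cX invX, of g] U0 u_def v_def ux_def vx_def by simp
    have Gd': "((\<lambda>s. sgG g ?P (U x s t)) has_vector_derivative
       (cy, ?P cy *v u + ?P c *v uy, ?P cy *v v + ?P c *v vy + g *\<^sub>R (?P h *v hy))) (at y)"
      unfolding eqG using F_path_G[OF cY invX, of g] U0 u_def v_def uy_def vy_def by simp
    have Fx: "Fx = (ax, ?P ax *v u + ?P a *v ux + g *\<^sub>R (?P h *v hx), ?P ax *v v + ?P a *v vx)"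
      using vector_derivative_unique_at[OF Fd Fd'] .
    have Gy: "Gy = (cy, ?P cy *v u + ?P c *v uy, ?P cy *v v + ?P c *v vy + g *\<^sub>R (?P h *v hy))"
      using vector_derivative_unique_at[OF Gd Gd'] .
    have eq1: "ht + ax + cy = 0"
      and eq2: "at1 + (?P ax *v u + ?P a *v ux + g *\<^sub>R (?P h *v hx)) + (?P cy *v u + ?P c *v uy) = - g *\<^sub>R (?P h *v bx)"
      and eq3: "ct + (?P ax *v v + ?P a *v vx) + (?P cy *v v + ?P c *v vy + g *\<^sub>R (?P h *v hy)) = - g *\<^sub>R (?P h *v by')"
      using eqn unfolding Fx Gy Ut0 U0 sgS_def bx_def by'_def by auto
    have Pu: "?P h *v u = a" "?P h *v v = c" using inv by (simp_all add: u_def v_def minv_app)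
    have uP: "u \<bullet> (?P h *v z) = a \<bullet> z" for z
      using P_inner[of u \<phi> \<rho> h z] Pu by (simp add: inner_commute)
    have vP: "v \<bullet> (?P h *v z) = c \<bullet> z" for z
      using P_inner[of v \<phi> \<rho> h z] Pu by (simp add: inner_commute)
    have at1e: "at1 = - g *\<^sub>R (?P h *v bx) - (?P ax *v u + ?P a *v ux + g *\<^sub>R (?P h *v hx)) - (?P cy *v u + ?P c *v uy)"
      by (subst eq2[symmetric]) simp
    have cte: "ct = - g *\<^sub>R (?P h *v by') - (?P ax *v v + ?P a *v vx) - (?P cy *v v + ?P c *v vy + g *\<^sub>R (?P h *v hy))"
      by (subst eq3[symmetric]) simp
    have hte: "ht = - ax - cy" using eq1 by (simp add: algebra_simps eq_neg_iff_add_eq_0)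
    have T1: "at1 \<bullet> u = - g * (a \<bullet> bx) - u \<bullet> (?P ax *v u) - u \<bullet> (?P a *v ux) - g * (a \<bullet> hx)
        - u \<bullet> (?P cy *v u) - u \<bullet> (?P c *v uy)"
      unfolding at1e
      by (simp add: inner_diff_left inner_add_left inner_commute[of "_ *v _" u] uP)
    have T2: "ct \<bullet> v = - g * (c \<bullet> by') - v \<bullet> (?P ax *v v) - v \<bullet> (?P a *v vx)
        - v \<bullet> (?P cy *v v) - v \<bullet> (?P c *v vy) - g * (c \<bullet> hy)"
      unfolding cte
      by (simp add: inner_diff_left inner_add_left inner_commute[of "_ *v _" v] vP)
    have T3: "u \<bullet> (?P ht *v u) = - (u \<bullet> (?P ax *v u)) - u \<bullet> (?P cy *v u)"
      "v \<bullet> (?P ht *v v) = - (v \<bullet> (?P ax *v v)) - v \<bullet> (?P cy *v v)"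
      unfolding hte by (simp_all add: P_diff P_minus mv_neg matrix_vector_mult_diff_rdistrib inner_diff_right)
    have T4: "h \<bullet> ht = - (ax \<bullet> h) - cy \<bullet> h" "ht \<bullet> b = - (ax \<bullet> b) - cy \<bullet> b"
      unfolding hte by (simp_all add: inner_diff_right inner_diff_left inner_commute[of h])
    have fin: "(at1 \<bullet> u + ct \<bullet> v - 1/2 * (u \<bullet> (?P ht *v u)) - 1/2 * (v \<bullet> (?P ht *v v))
        + g * (h \<bullet> ht) + g * (ht \<bullet> b))
      + (u \<bullet> (?P a *v ux) + 1/2 * (u \<bullet> (?P ax *v u)) + v \<bullet> (?P a *v vx) + 1/2 * (v \<bullet> (?P ax *v v))
        + g * (ax \<bullet> (h + b)) + g * (a \<bullet> (hx + bx)))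
      + (v \<bullet> (?P c *v vy) + 1/2 * (v \<bullet> (?P cy *v v)) + u \<bullet> (?P c *v uy) + 1/2 * (u \<bullet> (?P cy *v u))
        + g * (cy \<bullet> (h + b)) + g * (c \<bullet> (hy + by'))) = 0"
      unfolding T1 T2 T3 T4 by (simp add: inner_add_right algebra_simps)
    show ?thesis
      using DE DH DK fin unfolding b_def by blast
  qed
  show ?thesis using conv pde by blast
qed

end
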